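(* Consider a Markov decision process with state space $\mathcal{S}=[0,1]^d$, action space $\mathcal{A}=\mathbb{R}$, environment transition kernel $P(s'\mid s,a)$, discount factor $\gamma\in[0,1)$, horizon $T\in\mathbb{N}\cup\{\infty\}$, and reward function $r:\mathcal{S}\times\mathcal{A}\to[r_{\min},r_{\max}]$ with $|r(s,a)|\le r_{\max}$ for all $(s,a)$. Let $$f(s)=\sum_{i=1}^H W_{2,i}\,\phi\Big(\sum_{k=1}^d W_{1,ik}s_k+b_{1,i}\Big)+b_2$$ be a one-hidden-layer fully connected network, where $\phi:\mathbb{R}\to(a,b)\subseteq\mathbb{R}$ is $L_\phi$-Lipschitz. Fix an input index $j\in\{1,\dots,d\}$ and let $f_p$ be the "pruned" network obtained from $f$ by setting $W_{1,ij}=0$ for all $i=1,\dots,H$ (all other parameters unchanged). Let $\sigma_f>0$ and define the Gaussian policies $\pi_\theta(\cdot\mid s)=\mathcal{N}(f(s),\sigma_f^2)$ and $\pi_{\theta_p}(\cdot\mid s)=\mathcal{N}(f_p(s),\sigma_f^2)$. For $i\in\{1,2\}$ (index $1$ for $\pi_\theta$, index $2$ for $\pi_{\theta_p}$), let $p_i(s'\mid s)=\int P(s'\mid s,a)\,\pi_i(a\mid s)\,da$ be the induced state-to-state kernel, let both processes start from the same initial state distribution $p_1^0=p_2^0$, and let $p_i^t$ denote the state distribution at time $t$, i.e. $p_i^t(s')=\int p_i(s'\mid s)p_i^{t-1}(s)\,ds$. Assume $\delta\ge 0$ is such that $\sup_t \mathbb{E}_{s\sim p_1^{t}}\big[D_{TV}(p_1(\cdot\mid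 s)\,\|\,p_2(\cdot\mid s))\big]\le\delta$. Then $$|J(\pi_\theta)-J(\pi_{\theta_p})|\le 2r_{\max}\Big[\frac{\gamma\delta}{(1-\gamma)^2}+\frac{B_j}{\sigma_f(1-\gamma)}\Big],\qquad B_j=L_\phi\sum_{i=1}^H|W_{2,i}W_{1,ij}|.$$
   Context: For a policy $\pi$, $J(\pi)=\mathbb{E}\big[\sum_{t=0}^T\gamma^t r(s_t,a_t)\big]$ where $s_0\sim p^0$, $a_t\sim\pi(\cdot\mid s_t)$, $s_{t+1}\sim P(\cdot\mid s_t,a_t)$. The total variation distance between densities $p,q$ on the same space is $D_{TV}(p\|q)=\frac12\int|p(x)-q(x)|\,dx$. *)

theory Defs
  imports "HOL-Probability.Probability" "HOL-Library.Extended_Nat"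
begin

text \<open>State space [0,1]^d, with d encoded by the finite index type 'd.\<close>
definition state_space :: "(real ^ 'd) set" where
  "state_space = {s. \<forall>k. 0 \<le> s $ k \<and> s $ k \<le> 1}"

text \<open>One-hidden-layer network; hidden units indexed by the finite type 'h.\<close>
definition net :: "real ^ 'd ^ 'h \<Rightarrow> real ^ 'h \<Rightarrow> real ^ 'h \<Rightarrow> real \<Rightarrow> (real \<Rightarrow> real)
                    \<Rightarrow> real ^ 'd \<Rightarrow> real" where
  "net W1 b1 W2 b2 \<phi> s =
     (\<Sum>i\<in>UNIV. W2 $ i * \<phi> ((\<Sum>k\<in>UNIV. W1 $ i $ k * s $ k) + b1 $ i)) + b2"

definition prune :: "'d \<Rightarrow> real ^ 'd ^ 'h \<Rightarrow> real ^ 'd ^ 'h" where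
  "prune j W1 = (\<chi> i. \<chi> k. if k = j then 0 else W1 $ i $ k)"

definition gauss_policy :: "('s \<Rightarrow> real) \<Rightarrow> real \<Rightarrow> 's \<Rightarrow> real \<Rightarrow> real" where
  "gauss_policy f \<sigma> s a = normal_density (f s) \<sigma> a"

definition induced_kernel ::
  "('s \<Rightarrow> real \<Rightarrow> 's \<Rightarrow> real) \<Rightarrow> ('s \<Rightarrow> real \<Rightarrow> real) \<Rightarrow> 's \<Rightarrow> 's \<Rightarrow> real" where
  "induced_kernel P \<pi> s s' = (LINT a|lborel. P s a s' * \<pi> s a)"

fun marginal :: "'s::euclidean_space set \<Rightarrow> ('s \<Rightarrow> real) \<Rightarrow> ('s \<Rightarrow> 's \<Rightarrow> real)
                  \<Rightarrow> nat \<Rightarrow> 's \<Rightarrow> real" where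
  "marginal S p0 k 0 = p0"
| "marginal S p0 k (Suc t) = (\<lambda>s'. LINT s:S|lborel. k s s' * marginal S p0 k t s)"

definition tv_dist :: "'s::euclidean_space set \<Rightarrow> ('s \<Rightarrow> real) \<Rightarrow> ('s \<Rightarrow> real) \<Rightarrow> real" where
  "tv_dist S p q = 1/2 * (LINT x:S|lborel. \<bar>p x - q x\<bar>)"

text \<open>Expected discounted return J(pi) = E[sum_{t=0}^T gamma^t r(s_t,a_t)], written via
  linearity of expectation as sum_t gamma^t E_{s ~ p^t, a ~ pi(.|s)}[r(s,a)];
  the horizon T is an extended natural (T = \<infinity> allowed).\<close>
definition J :: "'s::euclidean_space set \<Rightarrow> ('s \<Rightarrow> real \<Rightarrow> 's \<Rightarrow> real) \<Rightarrow> ('s \<Rightarrow> real)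
                 \<Rightarrow> ('s \<Rightarrow> real \<Rightarrow> real) \<Rightarrow> real \<Rightarrow> enat \<Rightarrow> ('s \<Rightarrow> real \<Rightarrow> real) \<Rightarrow> real" where
  "J S P p0 r \<gamma> T \<pi> =
     (\<Sum>t. if enat t \<le> T then
             \<gamma> ^ t * (LINT s:S|lborel. marginal S p0 (induced_kernel P \<pi>) t s *
                                     (LINT a|lborel. \<pi> s a * r s a))
           else 0)"

end

theory Submission
  imports Defs
begin


lemma meas_lborel_prod[simp]: "borel_measurable (lborel \<Otimes>\<^sub>M lborel) = (borel_measurable borel :: (('a::euclidean_space \<times> 'b::euclidean_space) \<Rightarrow> real) set)"
  by (simp add: lborel_prod)

lemma lint_nn:
  fixes F :: "'a::euclidean_space \<Rightarrow> 'b::euclidean_space \<Rightarrow> real"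
  assumes Fm: "(\<lambda>p. F (fst p) (snd p)) \<in> borel_measurable borel" and F0: "\<And>x y. 0 \<le> F x y"
    and fin: "(\<integral>\<^sup>+y. \<integral>\<^sup>+x. F x y \<partial>lborel \<partial>lborel) < \<infinity>"
  shows "AE y in lborel. integrable lborel (\<lambda>x. F x y)"
   and "(\<integral>\<^sup>+y. ennreal (LINT x|lborel. F x y) \<partial>lborel) = (\<integral>\<^sup>+y. \<integral>\<^sup>+x. F x y \<partial>lborel \<partial>lborel)"
proof -
  have m2: "(\<lambda>p. F (snd p) (fst p)) \<in> borel_measurable (lborel \<Otimes>\<^sub>M lborel)"
    using measurable_compose[OF measurable_pair_swap' Fm[folded meas_lborel_prod]] by (simp add: comp_def case_prod_beta')
  have mi: "(\<lambda>y. \<integral>\<^sup>+x. F x y \<partial>lborel) \<in> borel_measurable lborel"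
  proof -
    have "(\<lambda>(y,x). ennreal (F x y)) \<in> borel_measurable (lborel \<Otimes>\<^sub>M lborel)"
    proof -
      have "(\<lambda>p. ennreal (F (snd p) (fst p))) \<in> borel_measurable (lborel \<Otimes>\<^sub>M lborel)"
        using m2 by measurable
      then show ?thesis by (simp add: case_prod_beta')
    qed
    from lborel.borel_measurable_nn_integral[OF this] show ?thesis .
  qed
  have ae: "AE y in lborel. (\<integral>\<^sup>+x. F x y \<partial>lborel) \<noteq> \<infinity>"
    by (rule nn_integral_PInf_AE[OF mi]) (use fin in auto)
  have mx: "\<And>y. (\<lambda>x. F x y) \<in> borel_measurable borel"
  proof -
    fix y
    have "(\<lambda>x::'a. (x, y::'b)) \<in> borel_measurable borel"
      by (intro borel_measurable_continuous_onI continuous_intros)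
    from measurable_compose[OF this Fm] show "(\<lambda>x. F x y) \<in> borel_measurable borel" by simp
  qed
  show ai: "AE y in lborel. integrable lborel (\<lambda>x. F x y)"
    using ae by eventually_elim (rule integrableI_nonneg, auto simp: mx F0 top.not_eq_extremum)
  show "(\<integral>\<^sup>+y. ennreal (LINT x|lborel. F x y) \<partial>lborel) = (\<integral>\<^sup>+y. \<integral>\<^sup>+x. F x y \<partial>lborel \<partial>lborel)"
    apply (rule nn_integral_cong_AE)
    using ai by eventually_elim (simp add: nn_integral_eq_integral F0)
qed

lemma fst_borel[measurable]: "fst \<in> borel_measurable (borel::('a::second_countable_topology \<times> 'b::second_countable_topology) measure)"
  by (intro borel_measurable_continuous_onI continuous_intros)
lemma snd_borel[measurable]: "snd \<in> borel_measurable (borel::('a::second_countable_topology \<times> 'b::second_countable_topology) measure)"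
  by (intro borel_measurable_continuous_onI continuous_intros)

lemma meas3:
  fixes P :: "'a::second_countable_topology \<Rightarrow> 'b::second_countable_topology \<Rightarrow> 'c::second_countable_topology \<Rightarrow> real"
  assumes Pm: "(\<lambda>x. P (fst x) (fst (snd x)) (snd (snd x))) \<in> borel_measurable borel"
    and f: "f \<in> borel_measurable M" and g: "g \<in> borel_measurable M" and h: "h \<in> borel_measurable M"
  shows "(\<lambda>x. P (f x) (g x) (h x)) \<in> borel_measurable M"
proof -
  have "(\<lambda>x. (g x, h x)) \<in> M \<rightarrow>\<^sub>M (borel \<Otimes>\<^sub>M borel)" using g h by measurable
  then have gh: "(\<lambda>x. (g x, h x)) \<in> M \<rightarrow>\<^sub>M borel" by (simp add: borel_prod)
  have "(\<lambda>x. (f x, g x, h x)) \<in> M \<rightarrow>\<^sub>M (borel \<Otimes>\<^sub>M borel)" using f gh by measurable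
  then have "(\<lambda>x. (f x, g x, h x)) \<in> M \<rightarrow>\<^sub>M borel" by (simp add: borel_prod)
  from measurable_compose[OF this Pm] show ?thesis by simp
qed

lemma meas2:
  fixes k :: "'a::second_countable_topology \<Rightarrow> 'b::second_countable_topology \<Rightarrow> 'c::{second_countable_topology,banach}"
  assumes km: "(\<lambda>x. k (fst x) (snd x)) \<in> borel_measurable borel"
    and f: "f \<in> borel_measurable M" and g: "g \<in> borel_measurable M"
  shows "(\<lambda>x. k (f x) (g x)) \<in> borel_measurable M"
proof -
  have "(\<lambda>x. (f x, g x)) \<in> M \<rightarrow>\<^sub>M (borel \<Otimes>\<^sub>M borel)" using f g by measurable
  then have "(\<lambda>x. (f x, g x)) \<in> M \<rightarrow>\<^sub>M borel" by (simp add: borel_prod)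
  from measurable_compose[OF this km] show ?thesis by simp
qed

lemma test1_unused:
  fixes P :: "'a::euclidean_space \<Rightarrow> real \<Rightarrow> 'a \<Rightarrow> real"
  assumes Pm: "(\<lambda>x. P (fst x) (fst (snd x)) (snd (snd x))) \<in> borel_measurable borel"
   and S: "S \<in> sets borel"
  shows "(\<lambda>p. indicator S (snd p) * P s (fst p) (snd p)) \<in> borel_measurable borel"
proof -
  note meas3[OF Pm, measurable (raw)]
  show ?thesis using S by measurable
qed

lemma nn_to_set:
  fixes f :: "'a::euclidean_space \<Rightarrow> real"
  assumes fm: "f \<in> borel_measurable borel" and f0: "\<And>x. x \<in> S \<Longrightarrow> 0 \<le> f x" and S: "S \<in> sets borel"
    and nn: "(\<integral>\<^sup>+x. ennreal (indicator S x * f x) \<partial>lborel) = ennreal c" and c: "0 \<le> c"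
  shows "set_integrable lborel S f" "(LINT x:S|lborel. f x) = c"
proof -
  have m: "(\<lambda>x. indicator S x * f x) \<in> borel_measurable lborel" using fm S by measurable
  have nonneg: "\<And>x. 0 \<le> indicator S x * f x" using f0 by (simp add: indicator_def)
  have i: "integrable lborel (\<lambda>x. indicator S x * f x)"
    by (rule integrableI_nonneg) (use m nonneg nn in auto)
  then show "set_integrable lborel S f" by (simp add: set_integrable_def)
  have "ennreal (LINT x|lborel. indicator S x * f x) = ennreal c"
    using nn_integral_eq_integral[OF i] nonneg nn by simp
  then have "(LINT x|lborel. indicator S x * f x) = c"
    using c nonneg by (simp add: integral_nonneg)
  then show "(LINT x:S|lborel. f x) = c" by (simp add: set_lebesgue_integral_def)
qed

lemma set_to_nn:
  fixes f :: "'a::euclidean_space \<Rightarrow> real"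
  assumes i: "set_integrable lborel S f" and f0: "\<And>x. x \<in> S \<Longrightarrow> 0 \<le> f x"
  shows "(\<integral>\<^sup>+x. ennreal (indicator S x * f x) \<partial>lborel) = ennreal (LINT x:S|lborel. f x)"
proof -
  have nonneg: "\<And>x. 0 \<le> indicator S x * f x" using f0 by (simp add: indicator_def)
  have i': "integrable lborel (\<lambda>x. indicator S x * f x)" using i by (simp add: set_integrable_def)
  show ?thesis using nn_integral_eq_integral[OF i'] nonneg by (simp add: set_lebesgue_integral_def)
qed

definition dens :: "'a::euclidean_space set \<Rightarrow> ('a \<Rightarrow> real) \<Rightarrow> bool" where
  "dens S p \<longleftrightarrow> p \<in> borel_measurable borel \<and> (\<forall>s. 0 \<le> p s) \<and> set_integrable lborel S p \<and> (LINT s:S|lborel. p s) = 1"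

definition kern :: "'a::euclidean_space set \<Rightarrow> ('a \<Rightarrow> 'a \<Rightarrow> real) \<Rightarrow> bool" where
  "kern S k \<longleftrightarrow> (\<lambda>x. k (fst x) (snd x)) \<in> borel_measurable borel \<and> (\<forall>s s'. 0 \<le> k s s')
     \<and> (\<forall>s\<in>S. set_integrable lborel S (k s) \<and> (LINT s':S|lborel. k s s') = 1)"

lemma Fubini_lb:
  fixes f :: "'a::euclidean_space \<Rightarrow> 'b::euclidean_space \<Rightarrow> ennreal"
  assumes "(\<lambda>x. f (fst x) (snd x)) \<in> borel_measurable borel"
  shows "(\<integral>\<^sup>+ y. (\<integral>\<^sup>+ x. f x y \<partial>lborel) \<partial>lborel) = (\<integral>\<^sup>+ x. (\<integral>\<^sup>+ y. f x y \<partial>lborel) \<partial>lborel)"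
proof -
  have ps: "pair_sigma_finite lborel lborel" by (simp add: pair_sigma_finite_def lborel.sigma_finite_measure_axioms)
  have "case_prod f \<in> borel_measurable (lborel \<Otimes>\<^sub>M lborel)"
    using assms by (simp add: lborel_prod case_prod_beta')
  from pair_sigma_finite.Fubini'[OF ps this] show ?thesis .
qed

lemma lint_meas:
  fixes f :: "'a::euclidean_space \<Rightarrow> 'b::euclidean_space \<Rightarrow> real"
  assumes "(\<lambda>x. f (fst x) (snd x)) \<in> borel_measurable borel"
  shows "(\<lambda>x. LINT y|lborel. f x y) \<in> borel_measurable borel"
proof -
  have "case_prod f \<in> borel_measurable (lborel \<Otimes>\<^sub>M lborel)"
    using assms by (simp add: lborel_prod case_prod_beta')
  from lborel.borel_measurable_lebesgue_integral[OF this] show ?thesis by simp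
qed

lemma marg_step:
  fixes k :: "'a::euclidean_space \<Rightarrow> 'a \<Rightarrow> real"
  assumes K: "kern S k" and D: "dens S p" and S[measurable]: "S \<in> sets borel"
  shows "dens S (\<lambda>s'. LINT s:S|lborel. k s s' * p s)"
    and "AE s' in lborel. s' \<in> S \<longrightarrow> set_integrable lborel S (\<lambda>s. k s s' * p s)"
proof -
  from K have km[measurable]: "(\<lambda>x. k (fst x) (snd x)) \<in> borel_measurable borel"
    and k0: "\<And>s s'. 0 \<le> k s s'" and ki: "\<And>s. s \<in> S \<Longrightarrow> set_integrable lborel S (k s)"
    and k1: "\<And>s. s \<in> S \<Longrightarrow> (LINT s':S|lborel. k s s') = 1"
    unfolding kern_def by auto
  from D have pm[measurable]: "p \<in> borel_measurable borel" and p0: "\<And>s. 0 \<le> p s"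
    and pi: "set_integrable lborel S p" and p1: "(LINT s:S|lborel. p s) = 1"
    unfolding dens_def by auto
  note meas2[OF km, measurable (raw)]
  define F where "F = (\<lambda>s s'. indicator S s * (k s s' * p s) * indicator S s')"
  have Fm: "(\<lambda>x. F (fst x) (snd x)) \<in> borel_measurable borel" unfolding F_def by measurable
  have F0: "\<And>s s'. 0 \<le> F s s'" unfolding F_def using k0 p0 by (simp add: indicator_def)
  have inner: "(\<integral>\<^sup>+s'. F s s' \<partial>lborel) = ennreal (indicator S s * p s)" for s
  proof (cases "s \<in> S")
    case True
    have "(\<integral>\<^sup>+s'. F s s' \<partial>lborel) = (\<integral>\<^sup>+s'. ennreal (p s) * ennreal (indicator S s' * k s s') \<partial>lborel)"
      unfolding F_def using True k0 p0 by (intro nn_integral_cong) (simp add: ennreal_mult'[symmetric] mult_ac)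
    also have "\<dots> = ennreal (p s) * (\<integral>\<^sup>+s'. ennreal (indicator S s' * k s s') \<partial>lborel)"
      by (rule nn_integral_cmult) simp
    also have "\<dots> = ennreal (p s)" using set_to_nn[OF ki[OF True]] k0 k1[OF True] by simp
    finally show ?thesis using True by simp
  next
    case False then show ?thesis unfolding F_def by simp
  qed
  have "(\<integral>\<^sup>+s'. \<integral>\<^sup>+s. F s s' \<partial>lborel \<partial>lborel) = (\<integral>\<^sup>+s. \<integral>\<^sup>+s'. F s s' \<partial>lborel \<partial>lborel)"
    by (rule Fubini_lb) (use Fm in measurable)
  also have "\<dots> = 1" using inner set_to_nn[OF pi] p0 p1 by simp
  finally have tot: "(\<integral>\<^sup>+s'. \<integral>\<^sup>+s. F s s' \<partial>lborel \<partial>lborel) = 1" .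
  have "(\<integral>\<^sup>+s'. ennreal (LINT s|lborel. F s s') \<partial>lborel) = 1"
    using lint_nn(2)[OF Fm F0] tot by simp
  moreover have "(LINT s|lborel. F s s') = indicator S s' * (LINT s:S|lborel. k s s' * p s)" for s'
  proof -
    have "(\<lambda>s. F s s') = (\<lambda>s. indicator S s' * (indicator S s *\<^sub>R (k s s' * p s)))"
      by (auto simp: F_def)
    then show ?thesis unfolding set_lebesgue_integral_def by (simp only: integral_mult_right_zero)
  qed
  ultimately have nn: "(\<integral>\<^sup>+s'. ennreal (indicator S s' * (LINT s:S|lborel. k s s' * p s)) \<partial>lborel) = ennreal 1" by simp
  have nm: "(\<lambda>s'. LINT s:S|lborel. k s s' * p s) \<in> borel_measurable borel"
  proof -
    have "(\<lambda>x. indicator S (snd x) *\<^sub>R (k (snd x) (fst x) * p (snd x))) \<in> borel_measurable borel"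
      by measurable
    from lint_meas[OF this] show ?thesis unfolding set_lebesgue_integral_def by simp
  qed
  have n0: "\<And>s'. 0 \<le> (LINT s:S|lborel. k s s' * p s)"
    unfolding set_lebesgue_integral_def using k0 p0 by (intro Bochner_Integration.integral_nonneg) (simp add: indicator_def)
  show "dens S (\<lambda>s'. LINT s:S|lborel. k s s' * p s)" unfolding dens_def using nn_to_set[OF nm _ S nn] nm n0 by auto
  have "AE s' in lborel. integrable lborel (\<lambda>s. F s s')" using lint_nn(1)[OF Fm F0] tot by simp
  then show "AE s' in lborel. s' \<in> S \<longrightarrow> set_integrable lborel S (\<lambda>s. k s s' * p s)"
  proof eventually_elim
    case (elim s')
    show ?case
    proof
      assume "s' \<in> S"
      then have "(\<lambda>s. F s s') = (\<lambda>s. indicator S s *\<^sub>R (k s s' * p s))" by (auto simp: F_def)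
      with elim show "set_integrable lborel S (\<lambda>s. k s s' * p s)" by (simp add: set_integrable_def)
    qed
  qed
qed

lemma marg_dens:
  assumes K: "kern S k" and D: "dens S p0" and S: "S \<in> sets borel"
  shows "dens S (marginal S p0 k t)"
  by (induction t) (auto simp: D intro: marg_step(1)[OF K _ S])

lemma abs_diff_lint_le:
  fixes g1 g2 :: "'a::euclidean_space \<Rightarrow> real"
  assumes i1: "integrable lborel g1" and i2: "integrable lborel g2" and h: "\<And>x. \<bar>g1 x - g2 x\<bar> \<le> h x"
  shows "ennreal \<bar>(LINT x|lborel. g1 x) - (LINT x|lborel. g2 x)\<bar> \<le> (\<integral>\<^sup>+x. ennreal (h x) \<partial>lborel)"
proof -
  have "\<bar>(LINT x|lborel. g1 x) - (LINT x|lborel. g2 x)\<bar> = norm (LINT x|lborel. g1 x - g2 x)"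
    using i1 i2 by simp
  also have "ennreal \<dots> \<le> (\<integral>\<^sup>+x. norm (g1 x - g2 x) \<partial>lborel)"
    by (rule integral_norm_bound_ennreal) (use i1 i2 in simp)
  also have "\<dots> \<le> (\<integral>\<^sup>+x. ennreal (h x) \<partial>lborel)"
    by (intro nn_integral_mono ennreal_leI) (use h in simp)
  finally show ?thesis .
qed



lemma kern_induced:
  fixes P :: "'a::euclidean_space \<Rightarrow> real \<Rightarrow> 'a \<Rightarrow> real" and \<pi> :: "'a \<Rightarrow> real \<Rightarrow> real"
  assumes Pm: "(\<lambda>x. P (fst x) (fst (snd x)) (snd (snd x))) \<in> borel_measurable borel"
    and P0: "\<And>s a s'. 0 \<le> P s a s'"
    and Pi: "\<And>s a. s \<in> S \<Longrightarrow> set_integrable lborel S (P s a)"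
    and P1: "\<And>s a. s \<in> S \<Longrightarrow> (LINT s':S|lborel. P s a s') = 1"
    and S[measurable]: "S \<in> sets borel"
    and \<pi>m: "(\<lambda>x. \<pi> (fst x) (snd x)) \<in> borel_measurable borel"
    and \<pi>0: "\<And>s a. 0 \<le> \<pi> s a"
    and \<pi>1: "\<And>s. (\<integral>\<^sup>+a. ennreal (\<pi> s a) \<partial>lborel) = 1"
  shows "kern S (induced_kernel P \<pi>)"
proof -
  note meas3[OF Pm, measurable (raw)] meas2[OF \<pi>m, measurable (raw)]
  have km: "(\<lambda>x. induced_kernel P \<pi> (fst x) (snd x)) \<in> borel_measurable borel"
  proof -
    have "(\<lambda>y. P (fst (fst y)) (snd y) (snd (fst y)) * \<pi> (fst (fst y)) (snd y)) \<in> borel_measurable borel"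
      by measurable
    from lint_meas[OF this] show ?thesis unfolding induced_kernel_def by simp
  qed
  note meas2[OF km, measurable (raw)]
  have k0: "\<And>s s'. 0 \<le> induced_kernel P \<pi> s s'"
    unfolding induced_kernel_def using P0 \<pi>0 by (intro Bochner_Integration.integral_nonneg) simp
  have "set_integrable lborel S (induced_kernel P \<pi> s) \<and> (LINT s':S|lborel. induced_kernel P \<pi> s s') = 1"
    if s: "s \<in> S" for s
  proof -
    define F where "F = (\<lambda>a s'. indicator S s' * (P s a s' * \<pi> s a))"
    have Fm: "(\<lambda>x. F (fst x) (snd x)) \<in> borel_measurable borel" unfolding F_def by measurable
    have F0: "\<And>a s'. 0 \<le> F a s'" unfolding F_def using P0 \<pi>0 by (simp add: indicator_def)
    have inner: "(\<integral>\<^sup>+s'. F a s' \<partial>lborel) = ennreal (\<pi> s a)" for a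
    proof -
      have "(\<integral>\<^sup>+s'. F a s' \<partial>lborel) = (\<integral>\<^sup>+s'. ennreal (\<pi> s a) * ennreal (indicator S s' * P s a s') \<partial>lborel)"
        unfolding F_def using P0 \<pi>0 by (intro nn_integral_cong) (simp add: ennreal_mult'[symmetric] mult_ac)
      also have "\<dots> = ennreal (\<pi> s a) * (\<integral>\<^sup>+s'. ennreal (indicator S s' * P s a s') \<partial>lborel)"
        by (rule nn_integral_cmult) simp
      also have "\<dots> = ennreal (\<pi> s a)" using set_to_nn[OF Pi[OF s]] P0 P1[OF s] by simp
      finally show ?thesis .
    qed
    have "(\<integral>\<^sup>+s'. \<integral>\<^sup>+a. F a s' \<partial>lborel \<partial>lborel) = (\<integral>\<^sup>+a. \<integral>\<^sup>+s'. F a s' \<partial>lborel \<partial>lborel)"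
      by (rule Fubini_lb) (use Fm in measurable)
    also have "\<dots> = 1" using inner \<pi>1 by simp
    finally have tot: "(\<integral>\<^sup>+s'. \<integral>\<^sup>+a. F a s' \<partial>lborel \<partial>lborel) = 1" .
    have "(\<integral>\<^sup>+s'. ennreal (LINT a|lborel. F a s') \<partial>lborel) = 1"
      using lint_nn(2)[OF Fm F0] tot by simp
    moreover have "(LINT a|lborel. F a s') = indicator S s' * induced_kernel P \<pi> s s'" for s'
      unfolding F_def induced_kernel_def by (rule integral_mult_right_zero)
    ultimately have nn: "(\<integral>\<^sup>+s'. ennreal (indicator S s' * induced_kernel P \<pi> s s') \<partial>lborel) = ennreal 1" by simp
    have "induced_kernel P \<pi> s \<in> borel_measurable borel" by measurable
    from nn_to_set[OF this _ S nn] k0 show ?thesis by auto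
  qed
  then show ?thesis unfolding kern_def using km k0 by auto
qed






lemma tv_bounds:
  fixes k1 k2 :: "'a::euclidean_space \<Rightarrow> 'a \<Rightarrow> real"
  assumes K1: "kern S k1" and K2: "kern S k2" and s: "s \<in> S"
  shows "0 \<le> tv_dist S (k1 s) (k2 s)" "tv_dist S (k1 s) (k2 s) \<le> 1"
    "set_integrable lborel S (\<lambda>s'. \<bar>k1 s s' - k2 s s'\<bar>)"
    "(LINT s':S|lborel. \<bar>k1 s s' - k2 s s'\<bar>) = 2 * tv_dist S (k1 s) (k2 s)"
proof -
  from K1 have k10: "\<And>s s'. 0 \<le> k1 s s'" and k1i: "set_integrable lborel S (k1 s)"
    and k11: "(LINT s':S|lborel. k1 s s') = 1" unfolding kern_def using s by auto
  from K2 have k20: "\<And>s s'. 0 \<le> k2 s s'" and k2i: "set_integrable lborel S (k2 s)"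
    and k21: "(LINT s':S|lborel. k2 s s') = 1" unfolding kern_def using s by auto
  show ai: "set_integrable lborel S (\<lambda>s'. \<bar>k1 s s' - k2 s s'\<bar>)"
    by (intro set_integrable_abs set_integral_diff(1) k1i k2i)
  have "(LINT s':S|lborel. \<bar>k1 s s' - k2 s s'\<bar>) \<le> (LINT s':S|lborel. k1 s s' + k2 s s')"
  proof (intro set_integral_mono ai set_integral_add(1) k1i k2i)
    fix s' show "\<bar>k1 s s' - k2 s s'\<bar> \<le> k1 s s' + k2 s s'" using k10[of s s'] k20[of s s'] by (simp add: abs_le_iff)
  qed
  also have "\<dots> = 2" using k11 k21 k1i k2i by (simp add: set_integral_add)
  finally have le2: "(LINT s':S|lborel. \<bar>k1 s s' - k2 s s'\<bar>) \<le> 2" .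
  have ge0: "0 \<le> (LINT s':S|lborel. \<bar>k1 s s' - k2 s s'\<bar>)"
    unfolding set_lebesgue_integral_def by (intro Bochner_Integration.integral_nonneg) (simp add: indicator_def)
  show "0 \<le> tv_dist S (k1 s) (k2 s)" "tv_dist S (k1 s) (k2 s) \<le> 1"
    "(LINT s':S|lborel. \<bar>k1 s s' - k2 s s'\<bar>) = 2 * tv_dist S (k1 s) (k2 s)"
    using le2 ge0 unfolding tv_dist_def by auto
qed

lemma tv_step:
  fixes k1 k2 :: "'a::euclidean_space \<Rightarrow> 'a \<Rightarrow> real"
  assumes K1: "kern S k1" and K2: "kern S k2" and D1: "dens S p1" and D2: "dens S p2"
    and S[measurable]: "S \<in> sets borel"
    and dlt: "(LINT s:S|lborel. p1 s * tv_dist S (k1 s) (k2 s)) \<le> \<delta>"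
  shows "(\<integral>\<^sup>+s'. ennreal (indicator S s' * \<bar>(LINT s:S|lborel. k1 s s' * p1 s) - (LINT s:S|lborel. k2 s s' * p2 s)\<bar>) \<partial>lborel)
         \<le> ennreal (2*\<delta>) + (\<integral>\<^sup>+s. ennreal (indicator S s * \<bar>p1 s - p2 s\<bar>) \<partial>lborel)"
proof -
  from K1 have k1m[measurable]: "(\<lambda>x. k1 (fst x) (snd x)) \<in> borel_measurable borel"
    and k10: "\<And>s s'. 0 \<le> k1 s s'" and k1i: "\<And>s. s \<in> S \<Longrightarrow> set_integrable lborel S (k1 s)"
    unfolding kern_def by auto
  from K2 have k2m[measurable]: "(\<lambda>x. k2 (fst x) (snd x)) \<in> borel_measurable borel"
    and k20: "\<And>s s'. 0 \<le> k2 s s'" and k2i: "\<And>s. s \<in> S \<Longrightarrow> set_integrable lborel S (k2 s)"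
    and k21: "\<And>s. s \<in> S \<Longrightarrow> (LINT s':S|lborel. k2 s s') = 1"
    unfolding kern_def by auto
  from D1 have p1m[measurable]: "p1 \<in> borel_measurable borel" and p10: "\<And>s. 0 \<le> p1 s"
    and p1i: "set_integrable lborel S p1" unfolding dens_def by auto
  from D2 have p2m[measurable]: "p2 \<in> borel_measurable borel" and p20: "\<And>s. 0 \<le> p2 s"
    and p2i: "set_integrable lborel S p2" unfolding dens_def by auto
  note meas2[OF k1m, measurable (raw)] meas2[OF k2m, measurable (raw)]
  define tv where "tv = (\<lambda>s. tv_dist S (k1 s) (k2 s))"
  have tvm[measurable]: "tv \<in> borel_measurable borel"
  proof -
    have "(\<lambda>x. indicator S (snd x) *\<^sub>R \<bar>k1 (fst x) (snd x) - k2 (fst x) (snd x)\<bar>) \<in> borel_measurable borel"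
      by measurable
    from lint_meas[OF this] show ?thesis unfolding tv_def tv_dist_def set_lebesgue_integral_def by simp
  qed
  define G where "G = (\<lambda>s s'. indicator S s' * (indicator S s * (\<bar>k1 s s' - k2 s s'\<bar> * p1 s + k2 s s' * \<bar>p1 s - p2 s\<bar>)))"
  have Gm: "(\<lambda>x. G (fst x) (snd x)) \<in> borel_measurable borel" unfolding G_def by measurable
  have G0: "\<And>s s'. 0 \<le> G s s'" unfolding G_def using p10 k20 by (simp add: indicator_def)
  have pw: "AE s' in lborel. ennreal (indicator S s' * \<bar>(LINT s:S|lborel. k1 s s' * p1 s) - (LINT s:S|lborel. k2 s s' * p2 s)\<bar>)
      \<le> (\<integral>\<^sup>+s. ennreal (G s s') \<partial>lborel)"
    using marg_step(2)[OF K1 D1 S] marg_step(2)[OF K2 D2 S]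
  proof eventually_elim
    case (elim s')
    show ?case
    proof (cases "s' \<in> S")
      case True
      have i1: "integrable lborel (\<lambda>s. indicator S s * (k1 s s' * p1 s))"
        using elim True by (simp add: set_integrable_def)
      have i2: "integrable lborel (\<lambda>s. indicator S s * (k2 s s' * p2 s))"
        using elim True by (simp add: set_integrable_def)
      have h: "\<bar>indicator S s * (k1 s s' * p1 s) - indicator S s * (k2 s s' * p2 s)\<bar> \<le> G s s'" for s
      proof -
        have "\<bar>k1 s s' * p1 s - k2 s s' * p2 s\<bar> = \<bar>(k1 s s' - k2 s s') * p1 s + k2 s s' * (p1 s - p2 s)\<bar>"
          by (simp add: algebra_simps)
        also have "\<dots> \<le> \<bar>(k1 s s' - k2 s s') * p1 s\<bar> + \<bar>k2 s s' * (p1 s - p2 s)\<bar>" by (rule abs_triangle_ineq)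
        also have "\<dots> = \<bar>k1 s s' - k2 s s'\<bar> * p1 s + k2 s s' * \<bar>p1 s - p2 s\<bar>"
          using p10 k20 by (simp add: abs_mult)
        finally show ?thesis unfolding G_def using True by (simp add: indicator_def)
      qed
      show ?thesis using abs_diff_lint_le[OF i1 i2 h] True unfolding set_lebesgue_integral_def by simp
    next
      case False then show ?thesis by simp
    qed
  qed
  have inner: "(\<integral>\<^sup>+s'. ennreal (G s s') \<partial>lborel) = ennreal (indicator S s * (p1 s * (2 * tv s)) + indicator S s * \<bar>p1 s - p2 s\<bar>)" for s
  proof (cases "s \<in> S")
    case True
    note tb = tv_bounds[OF K1 K2 True]
    have eq: "(\<lambda>s'. G s s') = (\<lambda>s'. p1 s * (indicator S s' *\<^sub>R \<bar>k1 s s' - k2 s s'\<bar>) + \<bar>p1 s - p2 s\<bar> * (indicator S s' *\<^sub>R k2 s s'))"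
      using True by (auto simp: G_def algebra_simps)
    have ia: "integrable lborel (\<lambda>s'. indicator S s' *\<^sub>R \<bar>k1 s s' - k2 s s'\<bar>)" using tb(3) by (simp add: set_integrable_def)
    have ib: "integrable lborel (\<lambda>s'. indicator S s' *\<^sub>R k2 s s')" using k2i[OF True] by (simp add: set_integrable_def)
    have "(\<integral>\<^sup>+s'. ennreal (G s s') \<partial>lborel) = ennreal (LINT s'|lborel. G s s')"
    proof (rule nn_integral_eq_integral)
      show "integrable lborel (\<lambda>s'. G s s')" unfolding eq using ia ib by simp
      show "AE s' in lborel. 0 \<le> G s s'" using G0 by simp
    qed
    also have "(LINT s'|lborel. G s s') = p1 s * (2 * tv s) + \<bar>p1 s - p2 s\<bar>"
      unfolding eq using ia ib tb(4) k21[OF True] by (simp add: set_lebesgue_integral_def tv_def)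
    finally show ?thesis using True by simp
  next
    case False then show ?thesis by (simp add: G_def)
  qed
  have ptv_i: "set_integrable lborel S (\<lambda>s. p1 s * tv s)"
    unfolding set_integrable_def
  proof (rule Bochner_Integration.integrable_bound)
    show "integrable lborel (\<lambda>s. indicator S s *\<^sub>R p1 s)" using p1i by (simp add: set_integrable_def)
    show "(\<lambda>s. indicator S s *\<^sub>R (p1 s * tv s)) \<in> borel_measurable lborel" by measurable
    show "AE s in lborel. norm (indicator S s *\<^sub>R (p1 s * tv s)) \<le> norm (indicator S s *\<^sub>R p1 s)"
    proof (intro AE_I2)
      fix s show "norm (indicator S s *\<^sub>R (p1 s * tv s)) \<le> norm (indicator S s *\<^sub>R p1 s)"
      proof (cases "s \<in> S")
        case True
        note tb = tv_bounds[OF K1 K2 True]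
        have "p1 s * tv s \<le> p1 s" using tb p10[of s] unfolding tv_def by (simp add: mult_left_le)
        then show ?thesis using True tb p10[of s] unfolding tv_def by simp
      qed simp
    qed
  qed
  have ptv0: "\<And>s. s \<in> S \<Longrightarrow> 0 \<le> p1 s * tv s" using tv_bounds(1)[OF K1 K2] p10 unfolding tv_def by simp
  have "(\<integral>\<^sup>+s'. ennreal (indicator S s' * \<bar>(LINT s:S|lborel. k1 s s' * p1 s) - (LINT s:S|lborel. k2 s s' * p2 s)\<bar>) \<partial>lborel)
      \<le> (\<integral>\<^sup>+s'. \<integral>\<^sup>+s. ennreal (G s s') \<partial>lborel \<partial>lborel)"
    by (rule nn_integral_mono_AE[OF pw])
  also have "\<dots> = (\<integral>\<^sup>+s. \<integral>\<^sup>+s'. ennreal (G s s') \<partial>lborel \<partial>lborel)"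
    by (rule Fubini_lb) (use Gm in measurable)
  also have "\<dots> = (\<integral>\<^sup>+s. ennreal (2 * (indicator S s * (p1 s * tv s))) + ennreal (indicator S s * \<bar>p1 s - p2 s\<bar>) \<partial>lborel)"
  proof (intro nn_integral_cong)
    fix s
    have a: "0 \<le> 2 * (indicator S s * (p1 s * tv s))" using ptv0[of s] by (cases "s \<in> S") auto
    have b: "0 \<le> indicator S s * \<bar>p1 s - p2 s\<bar>" by simp
    show "(\<integral>\<^sup>+s'. ennreal (G s s') \<partial>lborel) = ennreal (2 * (indicator S s * (p1 s * tv s))) + ennreal (indicator S s * \<bar>p1 s - p2 s\<bar>)"
      unfolding inner by (subst ennreal_plus[OF a b, symmetric]) (simp add: mult_ac)
  qed
  also have "\<dots> = (\<integral>\<^sup>+s. ennreal (2 * (indicator S s * (p1 s * tv s))) \<partial>lborel) + (\<integral>\<^sup>+s. ennreal (indicator S s * \<bar>p1 s - p2 s\<bar>) \<partial>lborel)"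
    by (rule nn_integral_add) measurable
  also have "(\<integral>\<^sup>+s. ennreal (2 * (indicator S s * (p1 s * tv s))) \<partial>lborel) = 2 * (\<integral>\<^sup>+s. ennreal (indicator S s * (p1 s * tv s)) \<partial>lborel)"
    by (subst nn_integral_cmult[symmetric]) (simp_all add: ennreal_mult')
  also have "(\<integral>\<^sup>+s. ennreal (indicator S s * (p1 s * tv s)) \<partial>lborel) = ennreal (LINT s:S|lborel. p1 s * tv s)"
    by (rule set_to_nn[OF ptv_i ptv0])
  also have "2 * ennreal (LINT s:S|lborel. p1 s * tv s) \<le> ennreal (2 * \<delta>)"
  proof -
    have "2 * ennreal (LINT s:S|lborel. p1 s * tv s) = ennreal (2 * (LINT s:S|lborel. p1 s * tv s))"
      by (simp add: ennreal_mult')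
    also have "\<dots> \<le> ennreal (2 * \<delta>)" using dlt unfolding tv_def by (intro ennreal_leI) simp
    finally show ?thesis .
  qed
  finally show ?thesis by (simp add: add_right_mono)
qed




lemma normal_deriv:
  assumes "\<sigma> > 0"
  shows "((\<lambda>m. normal_density m \<sigma> a) has_real_derivative (normal_density m \<sigma> a * (a - m) / \<sigma>\<^sup>2)) (at m)"
proof -
  have "((\<lambda>m. exp (-(a - m)\<^sup>2 / (2 * \<sigma>\<^sup>2))) has_real_derivative exp (-(a - m)\<^sup>2 / (2 * \<sigma>\<^sup>2)) * ((a - m) / \<sigma>\<^sup>2)) (at m)"
    using assms by (auto intro!: derivative_eq_intros simp: field_simps power2_eq_square)
  from DERIV_cmult[OF this, of "1 / sqrt (2 * pi * \<sigma>\<^sup>2)"] show ?thesis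
    unfolding normal_density_def by (simp add: mult_ac)
qed

lemma gauss_l1_le:
  fixes \<sigma> m1 m2 :: real
  assumes sp: "\<sigma> > 0" and le: "m1 \<le> m2"
  shows "(\<integral>\<^sup>+a. ennreal \<bar>normal_density m2 \<sigma> a - normal_density m1 \<sigma> a\<bar> \<partial>lborel) \<le> ennreal ((m2 - m1) / \<sigma>)"
proof -
  define g where "g = (\<lambda>m a. normal_density m \<sigma> a * (a - m) / \<sigma>\<^sup>2)"
  have cont: "continuous_on {m1..m2} (\<lambda>m. g m a)" for a
    unfolding g_def normal_density_def by (intro continuous_intros) (use sp in auto)
  have pw: "ennreal \<bar>normal_density m2 \<sigma> a - normal_density m1 \<sigma> a\<bar> \<le> (\<integral>\<^sup>+m. ennreal (indicator {m1..m2} m * \<bar>g m a\<bar>) \<partial>lborel)" for a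
  proof -
    have "(LBINT m=m1..m2. g m a) = normal_density m2 \<sigma> a - normal_density m1 \<sigma> a"
    proof (rule interval_integral_FTC_finite)
      show "continuous_on {min m1 m2..max m1 m2} (\<lambda>m. g m a)" using cont le by simp
      fix x
      show "((\<lambda>m. normal_density m \<sigma> a) has_vector_derivative g x a) (at x within {min m1 m2..max m1 m2})"
        using normal_deriv[OF sp, of a x] unfolding g_def
        by (simp add: has_real_derivative_iff_has_vector_derivative[symmetric] has_field_derivative_at_within)
    qed
    then have eq: "(LINT m|lborel. indicator {m1..m2} m *\<^sub>R g m a) = normal_density m2 \<sigma> a - normal_density m1 \<sigma> a"
      using le by (simp add: interval_integral_Icc set_lebesgue_integral_def)
    have int: "integrable lborel (\<lambda>m. indicator {m1..m2} m *\<^sub>R g m a)"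
      using borel_integrable_atLeastAtMost'[OF cont] by (simp add: set_integrable_def)
    have "ennreal (norm (LINT m|lborel. indicator {m1..m2} m *\<^sub>R g m a)) \<le> (\<integral>\<^sup>+m. norm (indicator {m1..m2} m *\<^sub>R g m a) \<partial>lborel)"
      by (rule integral_norm_bound_ennreal[OF int])
    also have "\<dots> = (\<integral>\<^sup>+m. ennreal (indicator {m1..m2} m * \<bar>g m a\<bar>) \<partial>lborel)"
      by (intro nn_integral_cong) (simp add: indicator_def)
    finally show ?thesis using eq by simp
  qed
  have inner: "(\<integral>\<^sup>+a. ennreal \<bar>g m a\<bar> \<partial>lborel) = ennreal (sqrt (2 / pi) / \<sigma>)" for m
  proof -
    have hb: "has_bochner_integral lborel (\<lambda>a. normal_density m \<sigma> a * \<bar>a - m\<bar> ^ (2 * 0 + 1)) (2^0 * \<sigma>^(2 * 0 + 1) * fact 0 * sqrt (2 / pi))"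
      using normal_moment_abs_odd sp by blast
    have hb2: "has_bochner_integral lborel (\<lambda>a. normal_density m \<sigma> a * \<bar>a - m\<bar> / \<sigma>\<^sup>2) (\<sigma> * sqrt (2 / pi) / \<sigma>\<^sup>2)"
      using has_bochner_integral_divide_zero[OF hb, of "\<sigma>\<^sup>2"] by simp
    have eqf: "\<And>a. \<bar>g m a\<bar> = normal_density m \<sigma> a * \<bar>a - m\<bar> / \<sigma>\<^sup>2"
      unfolding g_def by (auto simp: abs_mult)
    have "(\<integral>\<^sup>+a. ennreal \<bar>g m a\<bar> \<partial>lborel) = ennreal (\<sigma> * sqrt (2 / pi) / \<sigma>\<^sup>2)"
      unfolding eqf using sp nn_integral_eq_integral[OF integrable.intros[OF hb2]]
        has_bochner_integral_integral_eq[OF hb2] by simp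
    also have "\<sigma> * sqrt (2 / pi) / \<sigma>\<^sup>2 = sqrt (2 / pi) / \<sigma>" using sp by (simp add: power2_eq_square)
    finally show ?thesis .
  qed
  have gm: "(\<lambda>x. ennreal (indicator {m1..m2} (fst x) * \<bar>g (fst x) (snd x)\<bar>)) \<in> borel_measurable borel"
    unfolding g_def normal_density_def by measurable
  have "(\<integral>\<^sup>+a. ennreal \<bar>normal_density m2 \<sigma> a - normal_density m1 \<sigma> a\<bar> \<partial>lborel)
      \<le> (\<integral>\<^sup>+a. \<integral>\<^sup>+m. ennreal (indicator {m1..m2} m * \<bar>g m a\<bar>) \<partial>lborel \<partial>lborel)"
    by (intro nn_integral_mono pw)
  also have "\<dots> = (\<integral>\<^sup>+m. \<integral>\<^sup>+a. ennreal (indicator {m1..m2} m * \<bar>g m a\<bar>) \<partial>lborel \<partial>lborel)"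
    by (rule Fubini_lb[OF gm])
  also have "\<dots> = (\<integral>\<^sup>+m. ennreal (sqrt (2 / pi) / \<sigma>) * indicator {m1..m2} m \<partial>lborel)"
  proof (intro nn_integral_cong)
    fix m
    have "(\<integral>\<^sup>+a. ennreal (indicator {m1..m2} m * \<bar>g m a\<bar>) \<partial>lborel) = (\<integral>\<^sup>+a. indicator {m1..m2} m * ennreal \<bar>g m a\<bar> \<partial>lborel)"
      by (intro nn_integral_cong) (simp add: indicator_def)
    also have "\<dots> = indicator {m1..m2} m * (\<integral>\<^sup>+a. ennreal \<bar>g m a\<bar> \<partial>lborel)"
      by (rule nn_integral_cmult) (unfold g_def normal_density_def, measurable)
    finally show "(\<integral>\<^sup>+a. ennreal (indicator {m1..m2} m * \<bar>g m a\<bar>) \<partial>lborel) = ennreal (sqrt (2 / pi) / \<sigma>) * indicator {m1..m2} m"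
      using inner by (simp add: mult.commute)
  qed
  also have "\<dots> = ennreal (sqrt (2 / pi) / \<sigma>) * ennreal (m2 - m1)"
    using le by (subst nn_integral_cmult_indicator) auto
  also have "\<dots> = ennreal (sqrt (2 / pi) / \<sigma> * (m2 - m1))"
    using sp le by (subst ennreal_mult) auto
  also have "\<dots> \<le> ennreal ((m2 - m1) / \<sigma>)"
  proof (intro ennreal_leI)
    have "sqrt (2 / pi) \<le> 1" using pi_gt3 by simp
    then have "sqrt (2 / pi) * (m2 - m1) \<le> 1 * (m2 - m1)" using le by (intro mult_right_mono) auto
    then have "sqrt (2 / pi) * (m2 - m1) / \<sigma> \<le> (m2 - m1) / \<sigma>" using sp by (intro divide_right_mono) auto
    then show "sqrt (2 / pi) / \<sigma> * (m2 - m1) \<le> (m2 - m1) / \<sigma>" by simp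
  qed
  finally show ?thesis .
qed




lemma gauss_l1:
  fixes \<sigma> m1 m2 :: real
  assumes sp: "\<sigma> > 0"
  shows "(LINT a|lborel. \<bar>normal_density m1 \<sigma> a - normal_density m2 \<sigma> a\<bar>) \<le> \<bar>m1 - m2\<bar> / \<sigma>"
proof -
  have nn: "(\<integral>\<^sup>+a. ennreal \<bar>normal_density m1 \<sigma> a - normal_density m2 \<sigma> a\<bar> \<partial>lborel) \<le> ennreal (\<bar>m1 - m2\<bar> / \<sigma>)"
  proof (cases "m1 \<le> m2")
    case True
    then show ?thesis using gauss_l1_le[OF sp True] by (simp add: abs_minus_commute)
  next
    case False
    then show ?thesis using gauss_l1_le[OF sp, of m2 m1] by simp
  qed
  have i: "integrable lborel (\<lambda>a. \<bar>normal_density m1 \<sigma> a - normal_density m2 \<sigma> a\<bar>)" using sp by simp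
  have "ennreal (LINT a|lborel. \<bar>normal_density m1 \<sigma> a - normal_density m2 \<sigma> a\<bar>) \<le> ennreal (\<bar>m1 - m2\<bar> / \<sigma>)"
    using nn nn_integral_eq_integral[OF i] by simp
  then show ?thesis using sp by (simp add: ennreal_le_iff)
qed

lemma gauss_r_int:
  fixes \<rho> :: "real \<Rightarrow> real"
  assumes m: "\<rho> \<in> borel_measurable borel" and b: "\<And>a. \<bar>\<rho> a\<bar> \<le> R" and sp: "\<sigma> > 0"
  shows "integrable lborel (\<lambda>a. normal_density m \<sigma> a * \<rho> a)"
proof (rule Bochner_Integration.integrable_bound)
  show "integrable lborel (\<lambda>a. normal_density m \<sigma> a * R)" using sp by simp
  show "(\<lambda>a. normal_density m \<sigma> a * \<rho> a) \<in> borel_measurable lborel" using m by measurable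
  show "AE a in lborel. norm (normal_density m \<sigma> a * \<rho> a) \<le> norm (normal_density m \<sigma> a * R)"
  proof (intro AE_I2)
    fix a
    have "\<bar>\<rho> a\<bar> \<le> \<bar>R\<bar>" using b[of a] by simp
    then show "norm (normal_density m \<sigma> a * \<rho> a) \<le> norm (normal_density m \<sigma> a * R)"
      by (auto simp: abs_mult intro!: mult_left_mono)
  qed
qed

lemma rho_bound:
  fixes \<rho> :: "real \<Rightarrow> real"
  assumes m: "\<rho> \<in> borel_measurable borel" and b: "\<And>a. \<bar>\<rho> a\<bar> \<le> R" and sp: "\<sigma> > 0"
  shows "\<bar>LINT a|lborel. normal_density m \<sigma> a * \<rho> a\<bar> \<le> R"
proof -
  have "\<bar>LINT a|lborel. normal_density m \<sigma> a * \<rho> a\<bar> \<le> (LINT a|lborel. normal_density m \<sigma> a * R)"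
    by (rule integral_abs_bound_integral) (use gauss_r_int[OF m b sp] b sp in \<open>auto simp: abs_mult intro!: mult_left_mono\<close>)
  also have "\<dots> = R" using sp by simp
  finally show ?thesis .
qed

lemma rho_diff:
  fixes \<rho> :: "real \<Rightarrow> real"
  assumes m: "\<rho> \<in> borel_measurable borel" and b: "\<And>a. \<bar>\<rho> a\<bar> \<le> R" and sp: "\<sigma> > 0"
  shows "\<bar>(LINT a|lborel. normal_density m1 \<sigma> a * \<rho> a) - (LINT a|lborel. normal_density m2 \<sigma> a * \<rho> a)\<bar> \<le> R * (\<bar>m1 - m2\<bar> / \<sigma>)"
proof -
  note i1 = gauss_r_int[OF m b sp, of m1] and i2 = gauss_r_int[OF m b sp, of m2]
  have R0: "0 \<le> R" using b[of 0] by simp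
  have "\<bar>(LINT a|lborel. normal_density m1 \<sigma> a * \<rho> a) - (LINT a|lborel. normal_density m2 \<sigma> a * \<rho> a)\<bar>
      = \<bar>LINT a|lborel. normal_density m1 \<sigma> a * \<rho> a - normal_density m2 \<sigma> a * \<rho> a\<bar>"
    using i1 i2 by simp
  also have "\<dots> \<le> (LINT a|lborel. R * \<bar>normal_density m1 \<sigma> a - normal_density m2 \<sigma> a\<bar>)"
  proof (rule integral_abs_bound_integral)
    show "integrable lborel (\<lambda>a. normal_density m1 \<sigma> a * \<rho> a - normal_density m2 \<sigma> a * \<rho> a)" using i1 i2 by simp
    show "integrable lborel (\<lambda>a. R * \<bar>normal_density m1 \<sigma> a - normal_density m2 \<sigma> a\<bar>)" using sp by simp
    fix a
    have "\<bar>normal_density m1 \<sigma> a * \<rho> a - normal_density m2 \<sigma> a * \<rho> a\<bar> = \<bar>normal_density m1 \<sigma> a - normal_density m2 \<sigma> a\<bar> * \<bar>\<rho> a\<bar>"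
      by (simp add: abs_mult left_diff_distrib[symmetric])
    also have "\<dots> \<le> \<bar>normal_density m1 \<sigma> a - normal_density m2 \<sigma> a\<bar> * R" using b by (intro mult_left_mono) auto
    finally show "\<bar>normal_density m1 \<sigma> a * \<rho> a - normal_density m2 \<sigma> a * \<rho> a\<bar> \<le> R * \<bar>normal_density m1 \<sigma> a - normal_density m2 \<sigma> a\<bar>"
      by (simp add: mult.commute)
  qed
  also have "\<dots> = R * (LINT a|lborel. \<bar>normal_density m1 \<sigma> a - normal_density m2 \<sigma> a\<bar>)" by simp
  also have "\<dots> \<le> R * (\<bar>m1 - m2\<bar> / \<sigma>)" using gauss_l1[OF sp] R0 by (intro mult_left_mono) auto
  finally show ?thesis .
qed

lemma X_int:
  fixes \<rho> :: "'a::euclidean_space \<Rightarrow> real"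
  assumes D: "dens S p" and S[measurable]: "S \<in> sets borel" and m[measurable]: "\<rho> \<in> borel_measurable borel"
    and b: "\<And>s. s \<in> S \<Longrightarrow> \<bar>\<rho> s\<bar> \<le> R"
  shows "set_integrable lborel S (\<lambda>s. p s * \<rho> s)"
proof -
  from D have pm[measurable]: "p \<in> borel_measurable borel" and p0: "\<And>s. 0 \<le> p s"
    and pi: "set_integrable lborel S p" unfolding dens_def by auto
  show ?thesis unfolding set_integrable_def
  proof (rule Bochner_Integration.integrable_bound)
    show "integrable lborel (\<lambda>s. indicator S s *\<^sub>R p s * R)" using pi by (simp add: set_integrable_def)
    show "(\<lambda>s. indicator S s *\<^sub>R (p s * \<rho> s)) \<in> borel_measurable lborel" by measurable
    show "AE s in lborel. norm (indicator S s *\<^sub>R (p s * \<rho> s)) \<le> norm (indicator S s *\<^sub>R p s * R)"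
    proof (intro AE_I2)
      fix s show "norm (indicator S s *\<^sub>R (p s * \<rho> s)) \<le> norm (indicator S s *\<^sub>R p s * R)"
      proof (cases "s \<in> S")
        case True
        have "\<bar>p s * \<rho> s\<bar> \<le> \<bar>p s * R\<bar>" using b[OF True] p0[of s] by (auto simp: abs_mult intro!: mult_left_mono)
        then show ?thesis using True by simp
      qed simp
    qed
  qed
qed

lemma X_bound:
  fixes \<rho> :: "'a::euclidean_space \<Rightarrow> real"
  assumes D: "dens S p" and S[measurable]: "S \<in> sets borel" and m[measurable]: "\<rho> \<in> borel_measurable borel"
    and b: "\<And>s. s \<in> S \<Longrightarrow> \<bar>\<rho> s\<bar> \<le> R"
  shows "\<bar>LINT s:S|lborel. p s * \<rho> s\<bar> \<le> R"
proof -
  from D have p0: "\<And>s. 0 \<le> p s" and pi: "set_integrable lborel S p" and p1: "(LINT s:S|lborel. p s) = 1"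
    unfolding dens_def by auto
  have "\<bar>LINT s:S|lborel. p s * \<rho> s\<bar> \<le> (LINT s:S|lborel. p s * R)"
    unfolding set_lebesgue_integral_def
  proof (rule integral_abs_bound_integral)
    show "integrable lborel (\<lambda>s. indicator S s *\<^sub>R (p s * \<rho> s))" using X_int[OF D S m b] by (simp add: set_integrable_def)
    show "integrable lborel (\<lambda>s. indicator S s *\<^sub>R (p s * R))" using pi by (simp add: set_integrable_def mult.assoc[symmetric])
    fix s show "\<bar>indicator S s *\<^sub>R (p s * \<rho> s)\<bar> \<le> indicator S s *\<^sub>R (p s * R)"
      using b[of s] p0[of s] by (cases "s \<in> S") (auto simp: abs_mult intro!: mult_left_mono)
  qed
  also have "\<dots> = R" using p1 unfolding set_lebesgue_integral_def by (simp add: mult.assoc[symmetric])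
  finally show ?thesis .
qed




lemma X_diff:
  fixes \<rho>1 \<rho>2 :: "'a::euclidean_space \<Rightarrow> real"
  assumes D1: "dens S p1" and D2: "dens S p2" and S[measurable]: "S \<in> sets borel"
    and m1[measurable]: "\<rho>1 \<in> borel_measurable borel" and m2[measurable]: "\<rho>2 \<in> borel_measurable borel"
    and b1: "\<And>s. s \<in> S \<Longrightarrow> \<bar>\<rho>1 s\<bar> \<le> R" and b2: "\<And>s. s \<in> S \<Longrightarrow> \<bar>\<rho>2 s\<bar> \<le> R"
    and e: "\<And>s. s \<in> S \<Longrightarrow> \<bar>\<rho>1 s - \<rho>2 s\<bar> \<le> E"
    and d: "(LINT s:S|lborel. \<bar>p1 s - p2 s\<bar>) \<le> D" and R0: "0 \<le> R"
  shows "\<bar>(LINT s:S|lborel. p1 s * \<rho>1 s) - (LINT s:S|lborel. p2 s * \<rho>2 s)\<bar> \<le> E + R * D"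
proof -
  from D1 have p10: "\<And>s. 0 \<le> p1 s" and p1i: "set_integrable lborel S p1" and p11: "(LINT s:S|lborel. p1 s) = 1"
    unfolding dens_def by auto
  from D2 have p2i: "set_integrable lborel S p2" unfolding dens_def by auto
  have i1: "integrable lborel (\<lambda>s. indicator S s * (p1 s * \<rho>1 s))"
    using X_int[OF D1 S m1 b1] by (simp add: set_integrable_def)
  have i2: "integrable lborel (\<lambda>s. indicator S s * (p2 s * \<rho>2 s))"
    using X_int[OF D2 S m2 b2] by (simp add: set_integrable_def)
  have ia: "integrable lborel (\<lambda>s. indicator S s * p1 s)" using p1i by (simp add: set_integrable_def)
  have ib: "integrable lborel (\<lambda>s. indicator S s * \<bar>p1 s - p2 s\<bar>)"
    using set_integrable_abs[OF set_integral_diff(1)[OF p1i p2i]] by (simp add: set_integrable_def)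
  have "\<bar>(LINT s:S|lborel. p1 s * \<rho>1 s) - (LINT s:S|lborel. p2 s * \<rho>2 s)\<bar>
      = \<bar>LINT s|lborel. indicator S s * (p1 s * \<rho>1 s) - indicator S s * (p2 s * \<rho>2 s)\<bar>"
    unfolding set_lebesgue_integral_def using i1 i2 by simp
  also have "\<dots> \<le> (LINT s|lborel. E * (indicator S s * p1 s) + R * (indicator S s * \<bar>p1 s - p2 s\<bar>))"
  proof (rule integral_abs_bound_integral)
    show "integrable lborel (\<lambda>s. indicator S s * (p1 s * \<rho>1 s) - indicator S s * (p2 s * \<rho>2 s))" using i1 i2 by simp
    show "integrable lborel (\<lambda>s. E * (indicator S s * p1 s) + R * (indicator S s * \<bar>p1 s - p2 s\<bar>))" using ia ib by simp
    fix s
    show "\<bar>indicator S s * (p1 s * \<rho>1 s) - indicator S s * (p2 s * \<rho>2 s)\<bar> \<le> E * (indicator S s * p1 s) + R * (indicator S s * \<bar>p1 s - p2 s\<bar>)"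
    proof (cases "s \<in> S")
      case True
      have "\<bar>p1 s * \<rho>1 s - p2 s * \<rho>2 s\<bar> = \<bar>p1 s * (\<rho>1 s - \<rho>2 s) + (p1 s - p2 s) * \<rho>2 s\<bar>" by (simp add: algebra_simps)
      also have "\<dots> \<le> \<bar>p1 s * (\<rho>1 s - \<rho>2 s)\<bar> + \<bar>(p1 s - p2 s) * \<rho>2 s\<bar>" by (rule abs_triangle_ineq)
      also have "\<bar>p1 s * (\<rho>1 s - \<rho>2 s)\<bar> \<le> p1 s * E" using p10[of s] e[OF True] by (auto simp: abs_mult intro!: mult_left_mono)
      also have "\<bar>(p1 s - p2 s) * \<rho>2 s\<bar> \<le> \<bar>p1 s - p2 s\<bar> * R" using b2[OF True] by (auto simp: abs_mult intro!: mult_left_mono)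
      finally show ?thesis using True by (simp add: mult_ac)
    qed simp
  qed
  also have "\<dots> = E * (LINT s:S|lborel. p1 s) + R * (LINT s:S|lborel. \<bar>p1 s - p2 s\<bar>)"
    using ia ib unfolding set_lebesgue_integral_def by simp
  also have "\<dots> \<le> E + R * D"
    using p11 d R0 by (simp add: mult_left_mono)
  finally show ?thesis .
qed

lemma tv_marg:
  fixes k1 k2 :: "'a::euclidean_space \<Rightarrow> 'a \<Rightarrow> real"
  assumes K1: "kern S k1" and K2: "kern S k2" and D0: "dens S p0" and S[measurable]: "S \<in> sets borel"
    and dlt: "\<And>t. (LINT s:S|lborel. marginal S p0 k1 t s * tv_dist S (k1 s) (k2 s)) \<le> \<delta>"
    and d0: "0 \<le> \<delta>"
  shows "(\<integral>\<^sup>+s. ennreal (indicator S s * \<bar>marginal S p0 k1 t s - marginal S p0 k2 t s\<bar>) \<partial>lborel) \<le> ennreal (2 * real t * \<delta>)"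
proof (induction t)
  case 0
  then show ?case by simp
next
  case (Suc t)
  have "(\<integral>\<^sup>+s. ennreal (indicator S s * \<bar>marginal S p0 k1 (Suc t) s - marginal S p0 k2 (Suc t) s\<bar>) \<partial>lborel)
     \<le> ennreal (2*\<delta>) + (\<integral>\<^sup>+s. ennreal (indicator S s * \<bar>marginal S p0 k1 t s - marginal S p0 k2 t s\<bar>) \<partial>lborel)"
    using tv_step[OF K1 K2 marg_dens[OF K1 D0 S] marg_dens[OF K2 D0 S] S dlt[of t]] by simp
  also have "\<dots> \<le> ennreal (2*\<delta>) + ennreal (2 * real t * \<delta>)" using Suc by (rule add_left_mono)
  also have "\<dots> = ennreal (2*\<delta> + 2 * real t * \<delta>)" using d0 by (subst ennreal_plus) auto
  also have "2*\<delta> + 2 * real t * \<delta> = 2 * real (Suc t) * \<delta>" by (simp add: algebra_simps)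
  finally show ?case .
qed

lemma tv_marg_real:
  fixes k1 k2 :: "'a::euclidean_space \<Rightarrow> 'a \<Rightarrow> real"
  assumes K1: "kern S k1" and K2: "kern S k2" and D0: "dens S p0" and S[measurable]: "S \<in> sets borel"
    and dlt: "\<And>t. (LINT s:S|lborel. marginal S p0 k1 t s * tv_dist S (k1 s) (k2 s)) \<le> \<delta>"
    and d0: "0 \<le> \<delta>"
  shows "(LINT s:S|lborel. \<bar>marginal S p0 k1 t s - marginal S p0 k2 t s\<bar>) \<le> 2 * real t * \<delta>"
proof -
  have i: "set_integrable lborel S (\<lambda>s. \<bar>marginal S p0 k1 t s - marginal S p0 k2 t s\<bar>)"
    using marg_dens[OF K1 D0 S, of t] marg_dens[OF K2 D0 S, of t] unfolding dens_def
    by (intro set_integrable_abs set_integral_diff(1)) auto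
  have "ennreal (LINT s:S|lborel. \<bar>marginal S p0 k1 t s - marginal S p0 k2 t s\<bar>) \<le> ennreal (2 * real t * \<delta>)"
  proof -
    have e: "(\<integral>\<^sup>+s. ennreal (indicator S s * \<bar>marginal S p0 k1 t s - marginal S p0 k2 t s\<bar>) \<partial>lborel)
       = ennreal (LINT s:S|lborel. \<bar>marginal S p0 k1 t s - marginal S p0 k2 t s\<bar>)"
      by (rule set_to_nn[OF i]) simp
    show ?thesis using tv_marg[OF K1 K2 D0 S dlt d0, of t] unfolding e .
  qed
  then show ?thesis using d0 by (simp add: ennreal_le_iff)
qed

lemma sum_nat_geom: assumes "0 \<le> (\<gamma>::real)" "\<gamma> < 1"
  shows "(\<lambda>n. real n * \<gamma> ^ n) sums (\<gamma> / (1 - \<gamma>)\<^sup>2)"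
proof -
  have "(\<lambda>n. of_nat (Suc n) * \<gamma> ^ n) sums (1 / (1 - \<gamma>)^2)" using geometric_deriv_sums[of \<gamma>] assms by simp
  from sums_mult[OF this, of \<gamma>] have "(\<lambda>n. real (Suc n) * \<gamma> ^ Suc n) sums (\<gamma> / (1 - \<gamma>)\<^sup>2)"
    by (simp add: mult_ac)
  then have "(\<lambda>n. (\<lambda>n. real n * \<gamma> ^ n) (Suc n)) sums (\<gamma> / (1 - \<gamma>)\<^sup>2)" by simp
  from sums_Suc_iff[THEN iffD1, OF this] show ?thesis by simp
qed

lemma sum_bound:
  fixes x1 x2 :: "nat \<Rightarrow> real" and T :: enat
  assumes g: "0 \<le> \<gamma>" "\<gamma> < 1" and b1: "\<And>t. \<bar>x1 t\<bar> \<le> R" and b2: "\<And>t. \<bar>x2 t\<bar> \<le> R"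
    and d: "\<And>t. \<bar>x1 t - x2 t\<bar> \<le> A + B * real t" and A: "0 \<le> A" and B: "0 \<le> B"
  shows "\<bar>(\<Sum>t. if enat t \<le> T then \<gamma> ^ t * x1 t else 0) - (\<Sum>t. if enat t \<le> T then \<gamma> ^ t * x2 t else 0)\<bar>
         \<le> A / (1 - \<gamma>) + B * (\<gamma> / (1 - \<gamma>)\<^sup>2)"
proof -
  have geo: "(\<lambda>t. \<gamma> ^ t) sums (1 / (1 - \<gamma>))" using geometric_sums[of \<gamma>] g by simp
  have R0: "0 \<le> R" using b1[of 0] by simp
  have sg: "summable (\<lambda>t. R * \<gamma> ^ t)" using geo by (intro summable_mult sums_summable) auto
  have s1: "summable (\<lambda>t. if enat t \<le> T then \<gamma> ^ t * x1 t else 0)"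
  proof (rule summable_comparison_test'[OF sg])
    fix n
    have "\<gamma> ^ n * \<bar>x1 n\<bar> \<le> \<gamma> ^ n * R" using b1[of n] g by (intro mult_left_mono) auto
    then show "norm (if enat n \<le> T then \<gamma> ^ n * x1 n else 0) \<le> R * \<gamma> ^ n"
      using g R0 by (auto simp: abs_mult mult.commute)
  qed
  have s2: "summable (\<lambda>t. if enat t \<le> T then \<gamma> ^ t * x2 t else 0)"
  proof (rule summable_comparison_test'[OF sg])
    fix n
    have "\<gamma> ^ n * \<bar>x2 n\<bar> \<le> \<gamma> ^ n * R" using b2[of n] g by (intro mult_left_mono) auto
    then show "norm (if enat n \<le> T then \<gamma> ^ n * x2 n else 0) \<le> R * \<gamma> ^ n"
      using g R0 by (auto simp: abs_mult mult.commute)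
  qed
  have sB: "(\<lambda>t. A * \<gamma> ^ t + B * (real t * \<gamma> ^ t)) sums (A * (1 / (1 - \<gamma>)) + B * (\<gamma> / (1 - \<gamma>)\<^sup>2))"
    by (intro sums_add sums_mult geo sum_nat_geom g)
  define d where "d = (\<lambda>t. (if enat t \<le> T then \<gamma> ^ t * x1 t else 0) - (if enat t \<le> T then \<gamma> ^ t * x2 t else 0))"
  have dle: "\<bar>d t\<bar> \<le> A * \<gamma> ^ t + B * (real t * \<gamma> ^ t)" for t
  proof -
    have "\<bar>d t\<bar> \<le> \<gamma> ^ t * \<bar>x1 t - x2 t\<bar>" unfolding d_def using g by (auto simp: abs_mult right_diff_distrib[symmetric])
    also have "\<dots> \<le> \<gamma> ^ t * (A + B * real t)" using d[of t] g by (intro mult_left_mono) auto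
    finally show ?thesis by (simp add: algebra_simps)
  qed
  have sd: "summable (\<lambda>t. \<bar>d t\<bar>)"
    by (rule summable_comparison_test'[OF sums_summable[OF sB]]) (use dle in auto)
  have "(\<Sum>t. if enat t \<le> T then \<gamma> ^ t * x1 t else 0) - (\<Sum>t. if enat t \<le> T then \<gamma> ^ t * x2 t else 0) = (\<Sum>t. d t)"
    unfolding d_def using suminf_diff[OF s1 s2] by simp
  also have "\<bar>\<dots>\<bar> \<le> (\<Sum>t. \<bar>d t\<bar>)" by (rule summable_rabs[OF sd])
  also have "\<dots> \<le> (\<Sum>t. A * \<gamma> ^ t + B * (real t * \<gamma> ^ t))"
    by (rule suminf_le[OF dle sd sums_summable[OF sB]])
  also have "\<dots> = A / (1 - \<gamma>) + B * (\<gamma> / (1 - \<gamma>)\<^sup>2)" using sums_unique[OF sB] by simp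
  finally show ?thesis .
qed




lemma vec_nth_meas[measurable]: "(\<lambda>s::real^'d. s $ k) \<in> borel_measurable borel"
  by (intro borel_measurable_continuous_onI linear_continuous_on bounded_linear_vec_nth)

lemma state_space_sets: "(state_space :: (real^'d) set) \<in> sets borel"
proof -
  have "closed (state_space :: (real^'d) set)"
    unfolding state_space_def
    by (intro closed_Collect_all closed_Collect_conj closed_Collect_le linear_continuous_on bounded_linear_vec_nth continuous_on_const)
  then show ?thesis by (rule borel_closed)
qed

lemma zero_state_space: "0 \<in> state_space" by (simp add: state_space_def)

lemma net_meas:
  assumes "continuous_on UNIV \<phi>"
  shows "net W1 b1 W2 b2 \<phi> \<in> borel_measurable borel"
proof -
  have [measurable]: "\<phi> \<in> borel_measurable borel" using assms by (rule borel_measurable_continuous_onI)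
  show ?thesis unfolding net_def[abs_def] by measurable
qed

lemma net_prune_diff:
  fixes W1 :: "real ^ 'd ^ 'h" and s :: "real ^ 'd"
  assumes lip: "\<And>x y. \<bar>\<phi> x - \<phi> y\<bar> \<le> L * \<bar>x - y\<bar>" and s: "s \<in> state_space"
  shows "\<bar>net W1 b1 W2 b2 \<phi> s - net (prune j W1) b1 W2 b2 \<phi> s\<bar> \<le> L * (\<Sum>i\<in>UNIV. \<bar>W2 $ i * W1 $ i $ j\<bar>)"
proof -
  have L0: "0 \<le> L" using lip[of 1 0] by simp
  have sj: "\<bar>s $ j\<bar> \<le> 1" using s by (auto simp: state_space_def)
  have inner: "(\<Sum>k\<in>UNIV. W1 $ i $ k * s $ k) - (\<Sum>k\<in>UNIV. prune j W1 $ i $ k * s $ k) = W1 $ i $ j * s $ j" for i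
  proof -
    have "(\<Sum>k\<in>UNIV. W1 $ i $ k * s $ k) - (\<Sum>k\<in>UNIV. prune j W1 $ i $ k * s $ k)
        = (\<Sum>k\<in>UNIV. if k = j then W1 $ i $ j * s $ j else 0)"
      unfolding sum_subtractf[symmetric] by (intro sum.cong) (auto simp: prune_def)
    then show ?thesis by simp
  qed
  have "net W1 b1 W2 b2 \<phi> s - net (prune j W1) b1 W2 b2 \<phi> s
     = (\<Sum>i\<in>UNIV. W2 $ i * (\<phi> ((\<Sum>k\<in>UNIV. W1 $ i $ k * s $ k) + b1 $ i) - \<phi> ((\<Sum>k\<in>UNIV. prune j W1 $ i $ k * s $ k) + b1 $ i)))"
    unfolding net_def by (simp add: sum_subtractf[symmetric] right_diff_distrib)
  also have "\<bar>\<dots>\<bar> \<le> (\<Sum>i\<in>UNIV. \<bar>W2 $ i * (\<phi> ((\<Sum>k\<in>UNIV. W1 $ i $ k * s $ k) + b1 $ i) - \<phi> ((\<Sum>k\<in>UNIV. prune j W1 $ i $ k * s $ k) + b1 $ i))\<bar>)"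
    by (rule sum_abs)
  also have "\<dots> \<le> (\<Sum>i\<in>UNIV. L * \<bar>W2 $ i * W1 $ i $ j\<bar>)"
  proof (rule sum_mono)
    fix i
    have "\<bar>\<phi> ((\<Sum>k\<in>UNIV. W1 $ i $ k * s $ k) + b1 $ i) - \<phi> ((\<Sum>k\<in>UNIV. prune j W1 $ i $ k * s $ k) + b1 $ i)\<bar>
        \<le> L * \<bar>W1 $ i $ j * s $ j\<bar>"
      using lip[of "(\<Sum>k\<in>UNIV. W1 $ i $ k * s $ k) + b1 $ i" "(\<Sum>k\<in>UNIV. prune j W1 $ i $ k * s $ k) + b1 $ i"] inner[of i]
      by (simp add: algebra_simps)
    also have "\<dots> \<le> L * \<bar>W1 $ i $ j\<bar>" using sj L0 by (auto simp: abs_mult intro!: mult_left_mono mult_right_le_one_le)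
    finally have "\<bar>W2 $ i\<bar> * \<bar>\<phi> ((\<Sum>k\<in>UNIV. W1 $ i $ k * s $ k) + b1 $ i) - \<phi> ((\<Sum>k\<in>UNIV. prune j W1 $ i $ k * s $ k) + b1 $ i)\<bar>
        \<le> \<bar>W2 $ i\<bar> * (L * \<bar>W1 $ i $ j\<bar>)" by (intro mult_left_mono) auto
    then show "\<bar>W2 $ i * (\<phi> ((\<Sum>k\<in>UNIV. W1 $ i $ k * s $ k) + b1 $ i) - \<phi> ((\<Sum>k\<in>UNIV. prune j W1 $ i $ k * s $ k) + b1 $ i))\<bar>
        \<le> L * \<bar>W2 $ i * W1 $ i $ j\<bar>" by (simp add: abs_mult mult_ac)
  qed
  also have "\<dots> = L * (\<Sum>i\<in>UNIV. \<bar>W2 $ i * W1 $ i $ j\<bar>)" by (simp add: sum_distrib_left)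
  finally show ?thesis .
qed

lemma gauss_policy_props:
  fixes f :: "'a::euclidean_space \<Rightarrow> real"
  assumes fm[measurable]: "f \<in> borel_measurable borel" and sp: "0 < \<sigma>"
  shows "(\<lambda>x. gauss_policy f \<sigma> (fst x) (snd x)) \<in> borel_measurable borel"
    and "\<And>s a. 0 \<le> gauss_policy f \<sigma> s a"
    and "\<And>s. (\<integral>\<^sup>+a. ennreal (gauss_policy f \<sigma> s a) \<partial>lborel) = 1"
proof -
  show "(\<lambda>x. gauss_policy f \<sigma> (fst x) (snd x)) \<in> borel_measurable borel"
    unfolding gauss_policy_def normal_density_def by measurable
  show "\<And>s a. 0 \<le> gauss_policy f \<sigma> s a" by (simp add: gauss_policy_def)
  fix s
  show "(\<integral>\<^sup>+a. ennreal (gauss_policy f \<sigma> s a) \<partial>lborel) = 1"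
    unfolding gauss_policy_def using nn_integral_eq_integral[of lborel "normal_density (f s) \<sigma>"] sp by simp
qed


theorem theorem1:
  fixes P :: "real ^ 'd \<Rightarrow> real \<Rightarrow> real ^ 'd \<Rightarrow> real"
    and p0 :: "real ^ 'd \<Rightarrow> real"
    and r :: "real ^ 'd \<Rightarrow> real \<Rightarrow> real"
    and \<gamma> rmin rmax :: real and T :: enat
    and W1 :: "real ^ 'd ^ 'h" and b1 W2 :: "real ^ 'h" and b2 :: real
    and \<phi> :: "real \<Rightarrow> real" and a b L\<phi> :: real
    and j :: 'd and \<sigma>f \<delta> :: real
  defines "S \<equiv> (state_space :: (real ^ 'd) set)"
    and "\<pi>1 \<equiv> gauss_policy (net W1 b1 W2 b2 \<phi>) \<sigma>f"
    and "\<pi>2 \<equiv> gauss_policy (net (prune j W1) b1 W2 b2 \<phi>) \<sigma>f"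
    and "Bj \<equiv> L\<phi> * (\<Sum>i\<in>UNIV. \<bar>W2 $ i * W1 $ i $ j\<bar>)"
  assumes gamma: "0 \<le> \<gamma>" "\<gamma> < 1"
    and P_meas: "(\<lambda>x. P (fst x) (fst (snd x)) (snd (snd x))) \<in> borel_measurable borel"
    and P_nonneg: "\<And>s a s'. 0 \<le> P s a s'"
    and P_int: "\<And>s a. s \<in> S \<Longrightarrow> set_integrable lborel S (P s a)"
    and P_prob: "\<And>s a. s \<in> S \<Longrightarrow> (LINT s':S|lborel. P s a s') = 1"
    and p0_meas: "p0 \<in> borel_measurable borel"
    and p0_nonneg: "\<And>s. 0 \<le> p0 s"
    and p0_int: "set_integrable lborel S p0"
    and p0_prob: "(LINT s:S|lborel. p0 s) = 1"
    and r_meas: "(\<lambda>x. r (fst x) (snd x)) \<in> borel_measurable borel"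
    and r_range: "\<And>s a. s \<in> S \<Longrightarrow> rmin \<le> r s a \<and> r s a \<le> rmax"
    and r_abs: "\<And>s a. s \<in> S \<Longrightarrow> \<bar>r s a\<bar> \<le> rmax"
    and phi_range: "\<And>x. \<phi> x \<in> {a<..<b}"
    and phi_lip: "\<And>x y. \<bar>\<phi> x - \<phi> y\<bar> \<le> L\<phi> * \<bar>x - y\<bar>"
    and sigma_pos: "0 < \<sigma>f"
    and delta_nonneg: "0 \<le> \<delta>"
    and delta_bound: "\<And>t. (LINT s:S|lborel.
            marginal S p0 (induced_kernel P \<pi>1) t s *
            tv_dist S (induced_kernel P \<pi>1 s) (induced_kernel P \<pi>2 s)) \<le> \<delta>"
  shows "\<bar>J S P p0 r \<gamma> T \<pi>1 - J S P p0 r \<gamma> T \<pi>2\<bar>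
           \<le> 2 * rmax * (\<gamma> * \<delta> / (1 - \<gamma>)\<^sup>2 + Bj / (\<sigma>f * (1 - \<gamma>)))"
proof -
  have Sset[measurable]: "S \<in> sets borel" unfolding S_def by (rule state_space_sets)
  have S0: "0 \<in> S" unfolding S_def by (rule zero_state_space)
  have rmax0: "0 \<le> rmax" using r_abs[OF S0, of 0] by simp
  have L0: "0 \<le> L\<phi>" using phi_lip[of 1 0] by simp
  have Bj0: "0 \<le> Bj" unfolding Bj_def using L0 by (intro mult_nonneg_nonneg sum_nonneg) auto
  have phic: "continuous_on UNIV \<phi>"
  proof (rule lipschitz_on_continuous_on)
    show "L\<phi>-lipschitz_on UNIV \<phi>" using phi_lip L0 by (intro lipschitz_onI) (auto simp: dist_real_def)
  qed
  define f1 where "f1 = net W1 b1 W2 b2 \<phi>"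
  define f2 where "f2 = net (prune j W1) b1 W2 b2 \<phi>"
  have f1m: "f1 \<in> borel_measurable borel" unfolding f1_def by (rule net_meas[OF phic])
  have f2m: "f2 \<in> borel_measurable borel" unfolding f2_def by (rule net_meas[OF phic])
  have fdiff: "\<And>s. s \<in> S \<Longrightarrow> \<bar>f1 s - f2 s\<bar> \<le> Bj"
    unfolding f1_def f2_def Bj_def S_def by (rule net_prune_diff[OF phi_lip])
  note pp1 = gauss_policy_props[OF f1m sigma_pos] and pp2 = gauss_policy_props[OF f2m sigma_pos]
  have K1: "kern S (induced_kernel P \<pi>1)" unfolding \<pi>1_def f1_def[symmetric]
    by (rule kern_induced[OF P_meas P_nonneg P_int P_prob Sset pp1])
  have K2: "kern S (induced_kernel P \<pi>2)" unfolding \<pi>2_def f2_def[symmetric]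
    by (rule kern_induced[OF P_meas P_nonneg P_int P_prob Sset pp2])
  have D0: "dens S p0" unfolding dens_def using p0_meas p0_nonneg p0_int p0_prob by auto
  note rm = meas2[OF r_meas, measurable (raw)]
  define \<rho>1 where "\<rho>1 = (\<lambda>s. LINT a|lborel. \<pi>1 s a * r s a)"
  define \<rho>2 where "\<rho>2 = (\<lambda>s. LINT a|lborel. \<pi>2 s a * r s a)"
  have \<rho>1m: "\<rho>1 \<in> borel_measurable borel"
  proof -
    note meas2[OF pp1(1), measurable (raw)]
    have "(\<lambda>x. gauss_policy f1 \<sigma>f (fst x) (snd x) * r (fst x) (snd x)) \<in> borel_measurable borel" by measurable
    from lint_meas[OF this] show ?thesis unfolding \<rho>1_def \<pi>1_def f1_def by simp
  qed
  have \<rho>2m: "\<rho>2 \<in> borel_measurable borel"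
  proof -
    note meas2[OF pp2(1), measurable (raw)]
    have "(\<lambda>x. gauss_policy f2 \<sigma>f (fst x) (snd x) * r (fst x) (snd x)) \<in> borel_measurable borel" by measurable
    from lint_meas[OF this] show ?thesis unfolding \<rho>2_def \<pi>2_def f2_def by simp
  qed
  have rsm: "\<And>s. (\<lambda>a. r s a) \<in> borel_measurable borel" by measurable
  have \<rho>1b: "\<And>s. s \<in> S \<Longrightarrow> \<bar>\<rho>1 s\<bar> \<le> rmax"
    unfolding \<rho>1_def \<pi>1_def gauss_policy_def f1_def[symmetric] using rho_bound[OF rsm r_abs sigma_pos] by blast
  have \<rho>2b: "\<And>s. s \<in> S \<Longrightarrow> \<bar>\<rho>2 s\<bar> \<le> rmax"
    unfolding \<rho>2_def \<pi>2_def gauss_policy_def f2_def[symmetric] using rho_bound[OF rsm r_abs sigma_pos] by blast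
  have \<rho>d: "\<bar>\<rho>1 s - \<rho>2 s\<bar> \<le> rmax * Bj / \<sigma>f" if s: "s \<in> S" for s
  proof -
    have "\<bar>\<rho>1 s - \<rho>2 s\<bar> \<le> rmax * (\<bar>f1 s - f2 s\<bar> / \<sigma>f)"
      unfolding \<rho>1_def \<rho>2_def \<pi>1_def \<pi>2_def gauss_policy_def f1_def[symmetric] f2_def[symmetric]
      by (rule rho_diff[OF rsm r_abs[OF s] sigma_pos])
    also have "\<dots> \<le> rmax * (Bj / \<sigma>f)" using fdiff[OF s] rmax0 sigma_pos
      by (intro mult_left_mono divide_right_mono) auto
    finally show ?thesis by simp
  qed
  define x1 where "x1 = (\<lambda>t. LINT s:S|lborel. marginal S p0 (induced_kernel P \<pi>1) t s * \<rho>1 s)"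
  define x2 where "x2 = (\<lambda>t. LINT s:S|lborel. marginal S p0 (induced_kernel P \<pi>2) t s * \<rho>2 s)"
  have J1: "J S P p0 r \<gamma> T \<pi>1 = (\<Sum>t. if enat t \<le> T then \<gamma> ^ t * x1 t else 0)"
    unfolding J_def x1_def \<rho>1_def ..
  have J2: "J S P p0 r \<gamma> T \<pi>2 = (\<Sum>t. if enat t \<le> T then \<gamma> ^ t * x2 t else 0)"
    unfolding J_def x2_def \<rho>2_def ..
  have x1b: "\<And>t. \<bar>x1 t\<bar> \<le> rmax" unfolding x1_def
    by (rule X_bound[OF marg_dens[OF K1 D0 Sset] Sset \<rho>1m \<rho>1b])
  have x2b: "\<And>t. \<bar>x2 t\<bar> \<le> rmax" unfolding x2_def
    by (rule X_bound[OF marg_dens[OF K2 D0 Sset] Sset \<rho>2m \<rho>2b])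
  have xd: "\<bar>x1 t - x2 t\<bar> \<le> rmax * Bj / \<sigma>f + 2 * rmax * \<delta> * real t" for t
  proof -
    have "\<bar>x1 t - x2 t\<bar> \<le> rmax * Bj / \<sigma>f + rmax * (2 * real t * \<delta>)"
      unfolding x1_def x2_def
      by (rule X_diff[OF marg_dens[OF K1 D0 Sset] marg_dens[OF K2 D0 Sset] Sset \<rho>1m \<rho>2m \<rho>1b \<rho>2b \<rho>d
            tv_marg_real[OF K1 K2 D0 Sset delta_bound delta_nonneg] rmax0])
    then show ?thesis by (simp add: algebra_simps)
  qed
  have "\<bar>J S P p0 r \<gamma> T \<pi>1 - J S P p0 r \<gamma> T \<pi>2\<bar> \<le> rmax * Bj / \<sigma>f / (1 - \<gamma>) + 2 * rmax * \<delta> * (\<gamma> / (1 - \<gamma>)\<^sup>2)"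
    unfolding J1 J2 using rmax0 Bj0 sigma_pos delta_nonneg
    by (intro sum_bound[OF gamma x1b x2b xd]) auto
  also have "\<dots> \<le> 2 * rmax * (\<gamma> * \<delta> / (1 - \<gamma>)\<^sup>2 + Bj / (\<sigma>f * (1 - \<gamma>)))"
  proof -
    have a: "0 \<le> rmax * Bj / \<sigma>f / (1 - \<gamma>)" using rmax0 Bj0 sigma_pos gamma by simp
    have "rmax * Bj / \<sigma>f / (1 - \<gamma>) + 2 * rmax * \<delta> * (\<gamma> / (1 - \<gamma>)\<^sup>2)
        \<le> 2 * (rmax * Bj / \<sigma>f / (1 - \<gamma>)) + 2 * rmax * \<delta> * (\<gamma> / (1 - \<gamma>)\<^sup>2)" using a by linarith
    also have "\<dots> = 2 * rmax * (\<gamma> * \<delta> / (1 - \<gamma>)\<^sup>2 + Bj / (\<sigma>f * (1 - \<gamma>)))"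
      by (simp add: algebra_simps)
    finally show ?thesis .
  qed
  finally show ?thesis .
qed

end
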